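(* For any $n\ge 1$, the degree polynomial of $(\mathsf{Tr}(n),\preccurlyeq)$ is $$\mathrm{d}_{\mathsf{Tr}(n)}(x,y)=(x+y)^{n-2}\left(x^2+(n+1)xy+y^2\right).$$
   Context: A triword of size $n$ is a word $u=u_1\cdots u_n$ with $u_i\in\{0,1,2\}$, $u_1\ne 2$, and such that $u_i=0$ implies $u_j\neq 1$ for all $j>i$; $\mathsf{Tr}(n)$ is their set, ordered componentwise ($u\preccurlyeq v$ iff $u_i\le v_i$ for all $i$). The degree polynomial is $\mathrm{d}_{\mathsf{Tr}(n)}(x,y)=\sum_{u\in\mathsf{Tr}(n)}x^{\mathrm{in}(u)}y^{\mathrm{out}(u)}$, where $\mathrm{in}(u)$ (resp. $\mathrm{out}(u)$) is the number of elements covered by (resp. covering) $u$. (For $n=1$ the formula is read as the rational expression, equal to $x+y$.) *)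

theory Defs
  imports Complex_Main
begin

definition triwords :: "nat \<Rightarrow> nat list set" where
  "triwords n = {u. length u = n \<and> set u \<subseteq> {0,1,2} \<and> (n \<ge> 1 \<longrightarrow> u ! 0 \<noteq> 2)
     \<and> (\<forall>i j. i < j \<and> j < n \<and> u ! i = 0 \<longrightarrow> u ! j \<noteq> 1)}"

definition tw_le :: "nat list \<Rightarrow> nat list \<Rightarrow> bool" where
  "tw_le u v \<longleftrightarrow> length u = length v \<and> (\<forall>i < length u. u ! i \<le> v ! i)"

definition tw_covers :: "nat \<Rightarrow> nat list \<Rightarrow> nat list \<Rightarrow> bool" where
  "tw_covers n v u \<longleftrightarrow> u \<in> triwords n \<and> v \<in> triwords n \<and> tw_le u v \<and> u \<noteq> v
     \<and> \<not> (\<exists>w \<in> triwords n. tw_le u w \<and> tw_le w v \<and> w \<noteq> u \<and> w \<noteq> v)"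

definition tw_in :: "nat \<Rightarrow> nat list \<Rightarrow> nat" where
  "tw_in n u = card {v \<in> triwords n. tw_covers n u v}"

definition tw_out :: "nat \<Rightarrow> nat list \<Rightarrow> nat" where
  "tw_out n u = card {v \<in> triwords n. tw_covers n v u}"

definition degree_poly :: "nat \<Rightarrow> real \<Rightarrow> real \<Rightarrow> real" where
  "degree_poly n x y = (\<Sum>u \<in> triwords n. x ^ tw_in n u * y ^ tw_out n u)"

end

theory Submission
  imports Defs
begin

lemma tr_iff: "u \<in> triwords n \<longleftrightarrow> length u = n \<and> (\<forall>i<n. u!i \<le> 2) \<and> (0 < n \<longrightarrow> u!0 \<noteq> 2)
   \<and> (\<forall>i j. i < j \<longrightarrow> j < n \<longrightarrow> u!i = 0 \<longrightarrow> u!j \<noteq> 1)"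
proof -
  have "set u \<subseteq> {0,1,2} \<longleftrightarrow> (\<forall>i<length u. u!i \<le> (2::nat))"
    by (auto simp: set_conv_nth subset_iff)
  then show ?thesis unfolding triwords_def by (auto simp: Suc_le_eq)
qed

lemma tr_len: "u \<in> triwords n \<Longrightarrow> length u = n" by (simp add: tr_iff)

lemma le_upd: "tw_le v w \<Longrightarrow> tw_le w u \<Longrightarrow> v = u[i:=c] \<Longrightarrow> w = u[i := w!i]"
proof (intro nth_equalityI)
  assume a: "tw_le v w" "tw_le w u" "v = u[i:=c]"
  then show "length w = length (u[i := w!i])" by (simp add: tw_le_def)
  fix k assume k: "k < length w"
  show "w!k = u[i := w!i]!k"
  proof (cases "k = i")
    case True then show ?thesis using k a by (simp add: tw_le_def)
  next
    case False
    have "v!k \<le> w!k" "w!k \<le> u!k" using a k by (auto simp: tw_le_def)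
    moreover have "v!k = u!k" using a False by simp
    ultimately show ?thesis using False by simp
  qed
qed

lemma L2:
  assumes u: "u \<in> triwords n" and v: "v \<in> triwords n" and le: "tw_le u v" and ne: "u \<noteq> v"
  shows "\<exists>i<n. \<exists>c < v!i. v[i:=c] \<in> triwords n \<and> tw_le u (v[i:=c])"
proof -
  have lu: "length u = n" and lv: "length v = n" using u v by (auto simp: tr_iff)
  have le': "\<And>i. i < n \<Longrightarrow> u!i \<le> v!i" using le lu by (auto simp: tw_le_def)
  have u2: "\<And>i. i<n \<Longrightarrow> u!i \<le> 2" and v2: "\<And>i. i<n \<Longrightarrow> v!i \<le> 2" using u v by (auto simp: tr_iff)
  have u01: "\<And>i j. i < j \<Longrightarrow> j < n \<Longrightarrow> u!i = 0 \<Longrightarrow> u!j \<noteq> 1" using u by (auto simp: tr_iff)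
  have v01: "\<And>i j. i < j \<Longrightarrow> j < n \<Longrightarrow> v!i = 0 \<Longrightarrow> v!j \<noteq> 1" using v by (auto simp: tr_iff)
  have v0: "0 < n \<Longrightarrow> v!0 \<noteq> 2" using v by (auto simp: tr_iff)
  show ?thesis
  proof (cases "\<exists>j<n. v!j = 1 \<and> u!j = 0")
    case True
    define S where "S = {j. j<n \<and> v!j = 1 \<and> u!j = 0}"
    have fS: "finite S" "S \<noteq> {}" using True by (auto simp: S_def)
    define m where "m = Max S"
    have mS: "m \<in> S" using fS Max_in m_def by blast
    have mmax: "\<And>j. j \<in> S \<Longrightarrow> j \<le> m" using fS Max_ge m_def by blast
    have m: "m < n" "v!m = 1" "u!m = 0" using mS by (auto simp: S_def)
    have noone: "\<And>k. m < k \<Longrightarrow> k < n \<Longrightarrow> v!k \<noteq> 1"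
    proof
      fix k assume k: "m < k" "k < n" "v!k = 1"
      have "u!k \<le> 1" using le' k by force
      moreover have "u!k \<noteq> 1" using u01 k m by blast
      ultimately have "k \<in> S" using k by (auto simp: S_def)
      then show False using mmax k by force
    qed
    have "v[m:=0] \<in> triwords n"
      unfolding tr_iff using lv v2 v0 v01 noone m
      by (auto simp: nth_list_update)
    moreover have "tw_le u (v[m:=0])" using le' m lu lv by (auto simp: tw_le_def nth_list_update)
    ultimately show ?thesis using m by auto
  next
    case False
    obtain i where i: "i < n" "u!i \<noteq> v!i" using ne lu lv nth_equalityI by metis
    have ilt: "u!i < v!i" using le' i by (simp add: order_le_neq_trans)
    have "v!i \<noteq> 1" using False i ilt by auto
    hence vi: "v!i = 2" using ilt v2[OF i(1)] by linarith
    show ?thesis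
    proof (cases "u!i = 1")
      case True
      have nz: "\<And>j. j < i \<Longrightarrow> v!j \<noteq> 0" using u01 True le' i by (metis le_zero_eq less_trans)
      have "v[i:=1] \<in> triwords n"
        unfolding tr_iff using lv v2 v0 v01 nz i
        by (auto simp: nth_list_update)
      moreover have "tw_le u (v[i:=1])" using le' i True lu lv by (auto simp: tw_le_def nth_list_update)
      ultimately show ?thesis using i vi by (intro exI[of _ i] conjI exI[of _ 1]) auto
    next
      case F2: False
      hence ui: "u!i = 0" using ilt vi by linarith
      have noone: "\<And>k. i < k \<Longrightarrow> k < n \<Longrightarrow> v!k \<noteq> 1"
      proof
        fix k assume k: "i < k" "k < n" "v!k = 1"
        have "u!k \<le> 1" using le' k by force
        moreover have "u!k \<noteq> 1" using u01 k ui by blast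
        ultimately show False using False k by auto
      qed
      have "v[i:=0] \<in> triwords n"
        unfolding tr_iff using lv v2 v0 v01 noone i
        by (auto simp: nth_list_update)
      moreover have "tw_le u (v[i:=0])" using le' i ui lu lv by (auto simp: tw_le_def nth_list_update)
      ultimately show ?thesis using i vi by (intro exI[of _ i] conjI exI[of _ 0]) auto
    qed
  qed
qed

lemma single:
  assumes "tw_covers n a b"
  shows "\<exists>i<n. b = a[i := b!i] \<and> b!i < a!i"
proof -
  have b: "b \<in> triwords n" and a: "a \<in> triwords n" and le: "tw_le b a" and ne: "b \<noteq> a"
    and no: "\<And>w. w \<in> triwords n \<Longrightarrow> tw_le b w \<Longrightarrow> tw_le w a \<Longrightarrow> w = b \<or> w = a"
    using assms unfolding tw_covers_def by blast+
  obtain i c where i: "i < n" "c < a!i" "a[i:=c] \<in> triwords n" "tw_le b (a[i:=c])"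
    using L2[OF b a le ne] by blast
  have la: "length a = n" using a tr_len by blast
  have "tw_le (a[i:=c]) a" using i la by (auto simp: tw_le_def nth_list_update)
  moreover have "a[i:=c] \<noteq> a" using i la by (metis less_irrefl nth_list_update_eq)
  ultimately have "a[i:=c] = b" using no i by blast
  then show ?thesis using i la by auto
qed


definition Din :: "nat \<Rightarrow> nat list \<Rightarrow> nat set" where
  "Din n u = {i. i<n \<and> (u!i = 2 \<or> (u!i = 1 \<and> (\<forall>j. i<j \<and> j<n \<longrightarrow> u!j \<noteq> 1)))}"
definition down :: "nat list \<Rightarrow> nat \<Rightarrow> nat list" where
  "down u i = u[i := (if u!i = 2 \<and> (\<forall>j<i. u!j \<noteq> 0) then 1 else 0)]"

lemma upd_inj:
  assumes "\<And>i. i \<in> D \<Longrightarrow> f i = u[i := g i] \<and> g i \<noteq> u!i \<and> i < length u"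
  shows "inj_on f D"
proof (rule inj_onI)
  fix i j assume ij: "i \<in> D" "j \<in> D" "f i = f j"
  show "i = j"
  proof (rule ccontr)
    assume "i \<noteq> j"
    have "f i ! i = g i" using assms[OF ij(1)] by simp
    moreover have "f j ! i = u!i" using assms[OF ij(2)] \<open>i \<noteq> j\<close> by simp
    ultimately show False using assms[OF ij(1)] ij(3) by simp
  qed
qed

lemma in_set_eq:
  assumes u: "u \<in> triwords n"
  shows "{v \<in> triwords n. tw_covers n u v} = down u ` Din n u"
proof -
  have lu: "length u = n" using u by (simp add: tr_iff)
  have u2: "\<And>i. i<n \<Longrightarrow> u!i \<le> 2" using u by (auto simp: tr_iff)
  have u01: "\<And>i j. i < j \<Longrightarrow> j < n \<Longrightarrow> u!i = 0 \<Longrightarrow> u!j \<noteq> 1" using u by (auto simp: tr_iff)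
  have u0: "0 < n \<Longrightarrow> u!0 \<noteq> 2" using u by (auto simp: tr_iff)
  have up1: "u[i:=1] \<in> triwords n" if "i < n" "u!i = 2" "\<forall>j<i. u!j \<noteq> 0" for i
    unfolding tr_iff using that lu u2 u01 u0
    by (auto simp: nth_list_update)
  show ?thesis
  proof
    show "{v \<in> triwords n. tw_covers n u v} \<subseteq> down u ` Din n u"
    proof
      fix v assume "v \<in> {v \<in> triwords n. tw_covers n u v}"
      hence v: "v \<in> triwords n" and cov: "tw_covers n u v" by auto
      have no: "\<And>w. w \<in> triwords n \<Longrightarrow> tw_le v w \<Longrightarrow> tw_le w u \<Longrightarrow> w = v \<or> w = u"
        using cov unfolding tw_covers_def by blast
      have v01: "\<And>i j. i < j \<Longrightarrow> j < n \<Longrightarrow> v!i = 0 \<Longrightarrow> v!j \<noteq> 1" using v by (auto simp: tr_iff)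
      obtain i where i: "i < n" "v = u[i := v!i]" "v!i < u!i" using single[OF cov] by blast
      have vj: "\<And>j. j \<noteq> i \<Longrightarrow> v!j = u!j" using i(2) by (metis nth_list_update_neq)
      consider "u!i = 1" "v!i = 0" | "u!i = 2" "v!i = 1" | "u!i = 2" "v!i = 0"
        using i u2[OF i(1)] by linarith
      then show "v \<in> down u ` Din n u"
      proof cases
        case 1
        have "\<forall>j. i<j \<and> j<n \<longrightarrow> u!j \<noteq> 1" using v01 vj i 1 by (metis less_irrefl)
        hence "i \<in> Din n u" using i 1 by (simp add: Din_def)
        moreover have "down u i = v" using 1 i by (simp add: down_def)
        ultimately show ?thesis by blast
      next
        case 2
        have "\<forall>j<i. u!j \<noteq> 0" using v01 vj i 2 by (metis less_irrefl less_trans)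
        hence "down u i = v" using 2 i by (simp add: down_def)
        moreover have "i \<in> Din n u" using i 2 by (simp add: Din_def)
        ultimately show ?thesis by blast
      next
        case 3
        have "\<not> (\<forall>j<i. u!j \<noteq> 0)"
        proof
          assume nz: "\<forall>j<i. u!j \<noteq> 0"
          have w: "u[i:=1] \<in> triwords n" using up1 i 3 nz by blast
          have "tw_le v (u[i:=1])" "tw_le (u[i:=1]) u" using i 3 lu vj
            by (auto simp: tw_le_def nth_list_update tr_len[OF v])
          moreover have "u[i:=1] \<noteq> v" "u[i:=1] \<noteq> u" using i 3 lu
            by (metis nth_list_update_eq one_neq_zero, metis nth_list_update_eq numeral_eq_one_iff semiring_norm(85))
          ultimately show False using no w by blast
        qed
        hence "down u i = v" using 3 i by (auto simp: down_def)
        moreover have "i \<in> Din n u" using i 3 by (simp add: Din_def)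
        ultimately show ?thesis by blast
      qed
    qed
  next
    show "down u ` Din n u \<subseteq> {v \<in> triwords n. tw_covers n u v}"
    proof
      fix v assume "v \<in> down u ` Din n u"
      then obtain i where iD: "i \<in> Din n u" and vd: "v = down u i" by blast
      have i: "i < n" using iD by (simp add: Din_def)
      define c where "c = (if u!i = 2 \<and> (\<forall>j<i. u!j \<noteq> 0) then 1 else (0::nat))"
      have vc: "v = u[i:=c]" using vd by (simp add: down_def c_def)
      have cl: "c < u!i" using iD c_def by (auto simp: Din_def)
      have vT: "v \<in> triwords n"
      proof (cases "u!i = 2 \<and> (\<forall>j<i. u!j \<noteq> 0)")
        case True then show ?thesis using up1 i vc c_def by simp
      next
        case False
        hence c0: "c = 0" by (simp add: c_def)
        have noone: "\<forall>k. i<k \<and> k<n \<longrightarrow> u!k \<noteq> 1"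
        proof (cases "u!i = 2")
          case True
          then obtain j where "j < i" "u!j = 0" using False by auto
          then show ?thesis using u01 by (meson less_trans)
        next
          case False then show ?thesis using iD by (simp add: Din_def)
        qed
        show ?thesis unfolding tr_iff vc c0 using lu u2 u01 u0 noone i
          by (auto simp: nth_list_update)
      qed
      have le1: "tw_le v u" using vc cl lu i unfolding tw_le_def by (simp add: nth_list_update less_imp_le)
      have ne: "v \<noteq> u" using vc cl i lu by (metis less_irrefl nth_list_update_eq)
      have "\<not> (\<exists>w \<in> triwords n. tw_le v w \<and> tw_le w u \<and> w \<noteq> v \<and> w \<noteq> u)"
      proof
        assume "\<exists>w \<in> triwords n. tw_le v w \<and> tw_le w u \<and> w \<noteq> v \<and> w \<noteq> u"
        then obtain w where w: "w \<in> triwords n" "tw_le v w" "tw_le w u" "w \<noteq> v" "w \<noteq> u" by blast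
        have we: "w = u[i := w!i]" using le_upd[OF w(2) w(3) vc] .
        have "c \<le> w!i" "w!i \<le> u!i" using w(2,3) vc i lu by (auto simp: tw_le_def)
        moreover have "w!i \<noteq> c" using we vc w(4) by metis
        moreover have "w!i \<noteq> u!i" using we w(5) by (metis list_update_id)
        moreover have "c \<le> 1" by (simp add: c_def)
        ultimately have wi: "c = 0" "u!i = 2" "w!i = 1" using u2[OF i] by arith+
        then obtain j where j: "j < i" "u!j = 0" using c_def by (auto split: if_splits)
        have "w!j = 0" using we j by (metis nat_neq_iff nth_list_update_neq)
        then show False using w(1) j wi i unfolding tr_iff by blast
      qed
      then show "v \<in> {v \<in> triwords n. tw_covers n u v}"
        using vT u le1 ne by (simp add: tw_covers_def)
    qed
  qed
qed


definition Dout :: "nat \<Rightarrow> nat list \<Rightarrow> nat set" where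
  "Dout n u = {i. i<n \<and> ((u!i = 1 \<and> i \<noteq> 0) \<or> u!i = 0)}"
definition up :: "nat list \<Rightarrow> nat \<Rightarrow> nat list" where
  "up u i = u[i := (if u!i = 0 \<and> (\<forall>j<i. u!j \<noteq> 0) then 1 else 2)]"

lemma out_set_eq:
  assumes u: "u \<in> triwords n"
  shows "{v \<in> triwords n. tw_covers n v u} = up u ` Dout n u"
proof -
  have lu: "length u = n" using u by (simp add: tr_iff)
  have u2: "\<And>i. i<n \<Longrightarrow> u!i \<le> 2" using u by (auto simp: tr_iff)
  have u01: "\<And>i j. i < j \<Longrightarrow> j < n \<Longrightarrow> u!i = 0 \<Longrightarrow> u!j \<noteq> 1" using u by (auto simp: tr_iff)
  have u0: "0 < n \<Longrightarrow> u!0 \<noteq> 2" using u by (auto simp: tr_iff)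
  have up1: "u[i:=1] \<in> triwords n" if "i < n" "u!i = 0" "\<forall>j<i. u!j \<noteq> 0" for i
    unfolding tr_iff using that lu u2 u01 u0
    by (auto simp: nth_list_update)
  have up2: "u[i:=2] \<in> triwords n" if "i < n" "i \<noteq> 0" for i
    unfolding tr_iff using that lu u2 u01 u0
    by (auto simp: nth_list_update)
  show ?thesis
  proof
    show "{v \<in> triwords n. tw_covers n v u} \<subseteq> up u ` Dout n u"
    proof
      fix v assume "v \<in> {v \<in> triwords n. tw_covers n v u}"
      hence v: "v \<in> triwords n" and cov: "tw_covers n v u" by auto
      have lv: "length v = n" using v by (simp add: tr_iff)
      have no: "\<And>w. w \<in> triwords n \<Longrightarrow> tw_le u w \<Longrightarrow> tw_le w v \<Longrightarrow> w = u \<or> w = v"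
        using cov unfolding tw_covers_def by blast
      have v01: "\<And>i j. i < j \<Longrightarrow> j < n \<Longrightarrow> v!i = 0 \<Longrightarrow> v!j \<noteq> 1" using v by (auto simp: tr_iff)
      have v2: "\<And>i. i<n \<Longrightarrow> v!i \<le> 2" using v by (auto simp: tr_iff)
      have v0: "0 < n \<Longrightarrow> v!0 \<noteq> 2" using v by (auto simp: tr_iff)
      obtain i where i: "i < n" "u = v[i := u!i]" "u!i < v!i" using single[OF cov] by blast
      have vu: "v = u[i := v!i]" using i(2) by (metis list_update_id list_update_overwrite)
      have vj: "\<And>j. j \<noteq> i \<Longrightarrow> v!j = u!j" using vu by (metis nth_list_update_neq)
      consider "u!i = 1" "v!i = 2" | "u!i = 0" "v!i = 1" | "u!i = 0" "v!i = 2"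
        using i v2[OF i(1)] by linarith
      then show "v \<in> up u ` Dout n u"
      proof cases
        case 1
        have "i \<noteq> 0" using v0 1 i by (metis gr_zeroI)
        hence "i \<in> Dout n u" using i 1 by (simp add: Dout_def)
        moreover have "up u i = v" using 1 vu by (simp add: up_def)
        ultimately show ?thesis by blast
      next
        case 2
        have "\<forall>j<i. u!j \<noteq> 0" using v01 vj i 2 by (metis less_irrefl less_trans)
        hence "up u i = v" using 2 vu by (simp add: up_def)
        moreover have "i \<in> Dout n u" using i 2 by (simp add: Dout_def)
        ultimately show ?thesis by blast
      next
        case 3
        have "\<not> (\<forall>j<i. u!j \<noteq> 0)"
        proof
          assume nz: "\<forall>j<i. u!j \<noteq> 0"
          have w: "u[i:=1] \<in> triwords n" using up1 i 3 nz by blast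
          have "tw_le u (u[i:=1])" "tw_le (u[i:=1]) v" using i 3 lu vj lv
            unfolding tw_le_def by (simp_all add: nth_list_update)
          moreover have "u[i:=1] \<noteq> v" "u[i:=1] \<noteq> u" using i 3 lu
            by (metis nth_list_update_eq numeral_eq_one_iff semiring_norm(85), metis nth_list_update_eq one_neq_zero)
          ultimately show False using no w by blast
        qed
        hence "up u i = v" using 3 vu by (auto simp: up_def)
        moreover have "i \<in> Dout n u" using i 3 by (simp add: Dout_def)
        ultimately show ?thesis by blast
      qed
    qed
  next
    show "up u ` Dout n u \<subseteq> {v \<in> triwords n. tw_covers n v u}"
    proof
      fix v assume "v \<in> up u ` Dout n u"
      then obtain i where iD: "i \<in> Dout n u" and vd: "v = up u i" by blast
      have i: "i < n" using iD by (simp add: Dout_def)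
      define c where "c = (if u!i = 0 \<and> (\<forall>j<i. u!j \<noteq> 0) then 1 else (2::nat))"
      have vc: "v = u[i:=c]" using vd by (simp add: up_def c_def)
      have cl: "u!i < c" using iD c_def by (auto simp: Dout_def)
      have vT: "v \<in> triwords n"
      proof (cases "u!i = 0 \<and> (\<forall>j<i. u!j \<noteq> 0)")
        case True then show ?thesis using up1 i vc c_def by simp
      next
        case False
        hence c2: "c = 2" by (simp add: c_def)
        have "i \<noteq> 0"
        proof (cases "u!i = 0")
          case True
          then obtain j where "j < i" using False by auto
          then show ?thesis by simp
        next
          case False then show ?thesis using iD by (simp add: Dout_def)
        qed
        then show ?thesis using up2 i vc c2 by simp
      qed
      have le1: "tw_le u v" using vc cl lu i unfolding tw_le_def by (simp add: nth_list_update less_imp_le)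
      have ne: "v \<noteq> u" using vc cl i lu by (metis less_irrefl nth_list_update_eq)
      have "\<not> (\<exists>w \<in> triwords n. tw_le u w \<and> tw_le w v \<and> w \<noteq> u \<and> w \<noteq> v)"
      proof
        assume "\<exists>w \<in> triwords n. tw_le u w \<and> tw_le w v \<and> w \<noteq> u \<and> w \<noteq> v"
        then obtain w where w: "w \<in> triwords n" "tw_le u w" "tw_le w v" "w \<noteq> u" "w \<noteq> v" by blast
        have wl: "length w = n" using w(1) by (simp add: tr_iff)
        have we: "w = u[i := w!i]"
        proof (rule nth_equalityI)
          show "length w = length (u[i := w!i])" using wl lu by simp
          fix k assume k: "k < length w"
          show "w!k = u[i := w!i]!k"
          proof (cases "k = i")
            case True then show ?thesis using k wl lu by simp
          next
            case False
            have "u!k \<le> w!k" "w!k \<le> v!k" using w(2,3) k wl by (auto simp: tw_le_def)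
            moreover have "v!k = u!k" using vc False by simp
            ultimately show ?thesis using False by simp
          qed
        qed
        have "u!i \<le> w!i" "w!i \<le> c" using w(2,3) vc i lu wl by (auto simp: tw_le_def)
        moreover have "w!i \<noteq> c" using we vc w(5) by metis
        moreover have "w!i \<noteq> u!i" using we w(4) by (metis list_update_id)
        moreover have "c \<le> 2" by (simp add: c_def)
        ultimately have wi: "c = 2" "u!i = 0" "w!i = 1" using c_def by (auto split: if_splits)
        then obtain j where j: "j < i" "u!j = 0" using c_def by (auto split: if_splits)
        have "w!j = 0" using we j by (metis nat_neq_iff nth_list_update_neq)
        then show False using w(1) j wi i unfolding tr_iff by blast
      qed
      then show "v \<in> {v \<in> triwords n. tw_covers n v u}"
        using vT u le1 ne by (simp add: tw_covers_def)
    qed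
  qed
qed


definition inF :: "nat list \<Rightarrow> nat" where
  "inF u = length (filter (\<lambda>c. c = 2) u) + (if u!0 = 1 then 1 else 0)"
definition outF :: "nat list \<Rightarrow> nat" where
  "outF u = length (filter (\<lambda>c. c = 0) u) + length (filter (\<lambda>c. c = 1) (tl u))"

lemma tw_in_eq:
  assumes u: "u \<in> triwords n" and n: "n \<ge> 1"
  shows "tw_in n u = inF u"
proof -
  have lu: "length u = n" using u by (simp add: tr_iff)
  have u2: "\<And>i. i<n \<Longrightarrow> u!i \<le> 2" using u by (auto simp: tr_iff)
  have u01: "\<And>i j. i < j \<Longrightarrow> j < n \<Longrightarrow> u!i = 0 \<Longrightarrow> u!j \<noteq> 1" using u by (auto simp: tr_iff)
  have u0: "u!0 \<noteq> 2" using u n by (auto simp: tr_iff)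
  have inj: "inj_on (down u) (Din n u)"
    by (rule upd_inj[where g = "\<lambda>i. if u!i = 2 \<and> (\<forall>j<i. u!j \<noteq> 0) then 1 else 0"])
       (auto simp: down_def Din_def lu)
  have "tw_in n u = card (Din n u)"
    unfolding tw_in_def in_set_eq[OF u] using card_image[OF inj] .
  also have "Din n u = {i. i < n \<and> u!i = 2} \<union> {i. i<n \<and> u!i = 1 \<and> (\<forall>j. i<j \<and> j<n \<longrightarrow> u!j \<noteq> 1)}"
    by (auto simp: Din_def)
  also have "card \<dots> = card {i. i < n \<and> u!i = 2} + card {i. i<n \<and> u!i = 1 \<and> (\<forall>j. i<j \<and> j<n \<longrightarrow> u!j \<noteq> 1)}"
    by (rule card_Un_disjoint) auto
  also have "card {i. i < n \<and> u!i = 2} = length (filter (\<lambda>c. c = 2) u)"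
    by (simp add: length_filter_conv_card lu)
  also have "card {i. i<n \<and> u!i = 1 \<and> (\<forall>j. i<j \<and> j<n \<longrightarrow> u!j \<noteq> 1)} = (if u!0 = 1 then 1 else 0)"
  proof (cases "u!0 = 1")
    case True
    define O1 where "O1 = {i. i<n \<and> u!i = 1}"
    have f: "finite O1" "O1 \<noteq> {}" using True n by (auto simp: O1_def intro!: exI[of _ 0])
    define m where "m = Max O1"
    have mO: "m \<in> O1" using f Max_in m_def by blast
    have mmax: "\<And>j. j \<in> O1 \<Longrightarrow> j \<le> m" using f Max_ge m_def by blast
    have "{i. i<n \<and> u!i = 1 \<and> (\<forall>j. i<j \<and> j<n \<longrightarrow> u!j \<noteq> 1)} = {m}"
    proof (intro equalityI subsetI)
      fix i assume "i \<in> {i. i<n \<and> u!i = 1 \<and> (\<forall>j. i<j \<and> j<n \<longrightarrow> u!j \<noteq> 1)}"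
      hence i: "i<n" "u!i = 1" "\<forall>j. i<j \<and> j<n \<longrightarrow> u!j \<noteq> 1" by auto
      have "i \<le> m" using i mmax by (auto simp: O1_def)
      moreover have "\<not> i < m" using i mO by (auto simp: O1_def)
      ultimately show "i \<in> {m}" by simp
    next
      fix i assume "i \<in> {m}"
      have "\<forall>j. m<j \<and> j<n \<longrightarrow> u!j \<noteq> 1"
      proof (intro allI impI)
        fix j assume j: "m<j \<and> j<n"
        show "u!j \<noteq> 1"
        proof
          assume "u!j = 1"
          hence "j \<in> O1" using j by (simp add: O1_def)
          hence "j \<le> m" by (rule mmax)
          then show False using j by simp
        qed
      qed
      then show "i \<in> {i. i<n \<and> u!i = 1 \<and> (\<forall>j. i<j \<and> j<n \<longrightarrow> u!j \<noteq> 1)}"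
        using mO \<open>i \<in> {m}\<close> by (simp add: O1_def)
    qed
    then show ?thesis using True by simp
  next
    case False
    hence "u!0 = 0" using u2[of 0] u0 n by linarith
    have "u!j \<noteq> 1" if "j < n" for j
    proof (cases "j = 0")
      case True then show ?thesis using False by simp
    next
      case False then show ?thesis using u01[of 0 j] that \<open>u!0 = 0\<close> by simp
    qed
    then show ?thesis using False by simp
  qed
  finally show ?thesis by (simp add: inF_def)
qed

lemma tw_out_eq:
  assumes u: "u \<in> triwords n" and n: "n \<ge> 1"
  shows "tw_out n u = outF u"
proof -
  have lu: "length u = n" using u by (simp add: tr_iff)
  have u2: "\<And>i. i<n \<Longrightarrow> u!i \<le> 2" using u by (auto simp: tr_iff)
  have inj: "inj_on (up u) (Dout n u)"
    by (rule upd_inj[where g = "\<lambda>i. if u!i = 0 \<and> (\<forall>j<i. u!j \<noteq> 0) then 1 else 2"])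
       (auto simp: up_def Dout_def lu)
  have "tw_out n u = card (Dout n u)"
    unfolding tw_out_def out_set_eq[OF u] using card_image[OF inj] .
  also have "Dout n u = {i. i < n \<and> u!i = 0} \<union> {i. i<n \<and> i \<noteq> 0 \<and> u!i = 1}"
    by (auto simp: Dout_def)
  also have "card \<dots> = card {i. i < n \<and> u!i = 0} + card {i. i<n \<and> i \<noteq> 0 \<and> u!i = 1}"
    by (rule card_Un_disjoint) auto
  also have "card {i. i < n \<and> u!i = 0} = length (filter (\<lambda>c. c = 0) u)"
    by (simp add: length_filter_conv_card lu)
  also have "card {i. i<n \<and> i \<noteq> 0 \<and> u!i = 1} = length (filter (\<lambda>c. c = 1) (tl u))"
  proof -
    obtain a t where ut: "u = a # t" using n lu by (cases u) auto
    have "{i. i<n \<and> i \<noteq> 0 \<and> u!i = 1} = Suc ` {i. i < length t \<and> t!i = 1}"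
    proof (intro equalityI subsetI)
      fix i assume "i \<in> {i. i<n \<and> i \<noteq> 0 \<and> u!i = 1}"
      then obtain k where k: "i = Suc k" "Suc k < n" "u!Suc k = 1" by (cases i) auto
      then have "k \<in> {i. i < length t \<and> t!i = 1}" using lu ut by simp
      then show "i \<in> Suc ` {i. i < length t \<and> t!i = 1}" using k by blast
    next
      fix i assume "i \<in> Suc ` {i. i < length t \<and> t!i = 1}"
      then show "i \<in> {i. i<n \<and> i \<noteq> 0 \<and> u!i = 1}" using lu ut by auto
    qed
    then show ?thesis using ut by (simp add: card_image length_filter_conv_card)
  qed
  finally show ?thesis by (simp add: outF_def)
qed


lemma app_mem:
  assumes lw: "length w = n" and n: "n \<ge> 1"
  shows "w @ [c] \<in> triwords (Suc n) \<longleftrightarrow> w \<in> triwords n \<and> c \<le> 2 \<and> (0 \<in> set w \<longrightarrow> c \<noteq> 1)"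
proof
  assume a: "w @ [c] \<in> triwords (Suc n)"
  have A: "\<forall>i<Suc n. (w@[c])!i \<le> 2" "(w@[c])!0 \<noteq> 2"
    "\<And>i j. i < j \<Longrightarrow> j < Suc n \<Longrightarrow> (w@[c])!i = 0 \<Longrightarrow> (w@[c])!j \<noteq> 1"
    using a unfolding tr_iff by auto
  have "w \<in> triwords n" unfolding tr_iff
  proof (intro conjI allI impI)
    show "length w = n" by fact
    fix i assume "i < n" then show "w!i \<le> 2" using A(1)[rule_format, of i] lw by (simp add: nth_append)
  next
    assume "0 < n" then show "w!0 \<noteq> 2" using A(2) lw by (simp add: nth_append)
  next
    fix i j assume "i < j" "j < n" "w!i = 0"
    then show "w!j \<noteq> 1" using A(3)[of i j] lw by (simp add: nth_append)
  qed
  moreover have "c \<le> 2" using A(1)[rule_format, of n] lw by (simp add: nth_append)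
  moreover have "0 \<in> set w \<longrightarrow> c \<noteq> 1"
  proof
    assume "0 \<in> set w"
    then obtain i where "i < n" "w!i = 0" using lw by (auto simp: in_set_conv_nth)
    then show "c \<noteq> 1" using A(3)[of i n] lw by (simp add: nth_append)
  qed
  ultimately show "w \<in> triwords n \<and> c \<le> 2 \<and> (0 \<in> set w \<longrightarrow> c \<noteq> 1)" by blast
next
  assume a: "w \<in> triwords n \<and> c \<le> 2 \<and> (0 \<in> set w \<longrightarrow> c \<noteq> 1)"
  have A: "\<forall>i<n. w!i \<le> 2" "w!0 \<noteq> 2"
    "\<And>i j. i < j \<Longrightarrow> j < n \<Longrightarrow> w!i = 0 \<Longrightarrow> w!j \<noteq> 1"
    using a n unfolding tr_iff by auto
  show "w @ [c] \<in> triwords (Suc n)" unfolding tr_iff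
  proof (intro conjI allI impI)
    show "length (w@[c]) = Suc n" using lw by simp
    fix i assume "i < Suc n" then show "(w@[c])!i \<le> 2" using A(1) a lw
      by (cases "i < n") (auto simp: nth_append)
  next
    show "(w@[c])!0 \<noteq> 2" using A(2) lw n by (simp add: nth_append)
  next
    fix i j assume ij: "i < j" "j < Suc n" "(w@[c])!i = 0"
    show "(w@[c])!j \<noteq> 1"
    proof (cases "j < n")
      case True then show ?thesis using ij A(3)[of i j] lw by (simp add: nth_append)
    next
      case False
      hence "j = n" using ij by simp
      moreover have "w!i = 0" "i < n" using ij lw \<open>j = n\<close> by (auto simp: nth_append)
      ultimately show ?thesis using a lw by (auto simp: nth_append in_set_conv_nth)
    qed
  qed
qed

definition allowed :: "nat list \<Rightarrow> nat set" where
  "allowed w = (if 0 \<in> set w then {0,2} else {0,1,2})"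

lemma tr_Suc:
  assumes n: "n \<ge> 1"
  shows "triwords (Suc n) = (\<lambda>(w,c). w @ [c]) ` (SIGMA w:triwords n. allowed w)"
proof (intro equalityI subsetI)
  fix u assume u: "u \<in> triwords (Suc n)"
  have lu: "length u = Suc n" using u by (simp add: tr_iff)
  then have ue: "u = butlast u @ [last u]" by (metis append_butlast_last_id list.size(3) nat.distinct(1))
  have lb: "length (butlast u) = n" using lu by simp
  have "butlast u \<in> triwords n \<and> last u \<le> 2 \<and> (0 \<in> set (butlast u) \<longrightarrow> last u \<noteq> 1)"
    using app_mem[OF lb n, of "last u"] u ue by simp
  hence "last u \<in> allowed (butlast u)" "butlast u \<in> triwords n"
    by (auto simp: allowed_def)
  then show "u \<in> (\<lambda>(w,c). w @ [c]) ` (SIGMA w:triwords n. allowed w)"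
    using ue by (auto simp: image_iff intro!: bexI[of _ "(butlast u, last u)"])
next
  fix u assume "u \<in> (\<lambda>(w,c). w @ [c]) ` (SIGMA w:triwords n. allowed w)"
  then obtain w c where wc: "u = w @ [c]" "w \<in> triwords n" "c \<in> allowed w" by auto
  have "length w = n" using wc by (simp add: tr_iff)
  moreover have "c \<le> 2 \<and> (0 \<in> set w \<longrightarrow> c \<noteq> 1)" using wc(3) by (auto simp: allowed_def split: if_splits)
  ultimately show "u \<in> triwords (Suc n)" using app_mem[OF _ n] wc by simp
qed

lemma fin_tr: "finite (triwords n)"
proof -
  have "triwords n \<subseteq> {xs. set xs \<subseteq> {0,1,2} \<and> length xs = n}" by (auto simp: triwords_def)
  moreover have "finite {xs. set xs \<subseteq> {0::nat,1,2} \<and> length xs = n}" by (rule finite_lists_length_eq) simp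
  ultimately show ?thesis by (rule finite_subset)
qed

lemma sum_Suc:
  assumes n: "n \<ge> 1"
  shows "(\<Sum>u\<in>triwords (Suc n). h u) = (\<Sum>w\<in>triwords n. \<Sum>c\<in>allowed w. h (w @ [c]))"
proof -
  have inj: "inj_on (\<lambda>(w,c). w @ [c]) (SIGMA w:triwords n. allowed w)"
    by (auto simp: inj_on_def)
  have "(\<Sum>u\<in>triwords (Suc n). h u) = (\<Sum>p\<in>(SIGMA w:triwords n. allowed w). h ((\<lambda>(w,c). w @ [c]) p))"
    unfolding tr_Suc[OF n] by (rule sum.reindex[OF inj, unfolded comp_def])
  also have "\<dots> = (\<Sum>w\<in>triwords n. \<Sum>c\<in>allowed w. h (w @ [c]))"
    by (subst sum.Sigma) (auto simp: fin_tr allowed_def case_prod_beta)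
  finally show ?thesis .
qed

lemma inF_app: "w \<noteq> [] \<Longrightarrow> inF (w @ [c]) = inF w + (if c = 2 then 1 else 0)"
  by (simp add: inF_def nth_append)
lemma outF_app: "w \<noteq> [] \<Longrightarrow> outF (w @ [c]) = outF w + (if c = 0 then 1 else 0) + (if c = 1 then 1 else 0)"
  by (cases w) (simp_all add: outF_def)


definition gg :: "real \<Rightarrow> real \<Rightarrow> nat list \<Rightarrow> real" where
  "gg x y u = x ^ inF u * y ^ outF u"
definition AA :: "real \<Rightarrow> real \<Rightarrow> nat \<Rightarrow> real" where
  "AA x y n = (\<Sum>u\<in>triwords n. if 0 \<in> set u then gg x y u else 0)"
definition BB :: "real \<Rightarrow> real \<Rightarrow> nat \<Rightarrow> real" where
  "BB x y n = (\<Sum>u\<in>triwords n. if 0 \<notin> set u then gg x y u else 0)"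

lemma tr1: "triwords 1 = {[0],[1]}"
proof (intro equalityI subsetI)
  fix u assume u: "u \<in> triwords 1"
  then obtain a where "u = [a]" by (auto simp: tr_iff length_Suc_conv)
  moreover have "a \<le> 2" "a \<noteq> 2" using u \<open>u = [a]\<close> by (auto simp: tr_iff)
  ultimately show "u \<in> {[0],[1]}" by auto
qed (auto simp: tr_iff)

lemma deg_AB: "n \<ge> 1 \<Longrightarrow> degree_poly n x y = AA x y n + BB x y n"
  unfolding degree_poly_def AA_def BB_def sum.distrib[symmetric]
  by (rule sum.cong) (auto simp: tw_in_eq tw_out_eq gg_def)

lemma gg_app: "w \<noteq> [] \<Longrightarrow> gg x y (w @ [c]) = gg x y w * (if c = 2 then x else 1) * (if c = 0 \<or> c = 1 then y else 1)"
  by (auto simp: gg_def inF_app outF_app)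

lemma B_Suc: "n \<ge> 1 \<Longrightarrow> BB x y (Suc n) = (x + y) * BB x y n"
proof -
  assume n: "n \<ge> 1"
  have "BB x y (Suc n) = (\<Sum>w\<in>triwords n. \<Sum>c\<in>allowed w. if 0 \<notin> set (w@[c]) then gg x y (w@[c]) else 0)"
    unfolding BB_def by (rule sum_Suc[OF n])
  also have "\<dots> = (\<Sum>w\<in>triwords n. (x + y) * (if 0 \<notin> set w then gg x y w else 0))"
  proof (rule sum.cong)
    fix w assume w: "w \<in> triwords n"
    hence "w \<noteq> []" using n by (auto simp: tr_iff)
    then show "(\<Sum>c\<in>allowed w. if 0 \<notin> set (w@[c]) then gg x y (w@[c]) else 0) = (x + y) * (if 0 \<notin> set w then gg x y w else 0)"
      by (auto simp: allowed_def gg_app algebra_simps)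
  qed simp
  finally show ?thesis by (simp add: BB_def sum_distrib_left)
qed

lemma A_Suc: "n \<ge> 1 \<Longrightarrow> AA x y (Suc n) = (x + y) * AA x y n + y * BB x y n"
proof -
  assume n: "n \<ge> 1"
  have "AA x y (Suc n) = (\<Sum>w\<in>triwords n. \<Sum>c\<in>allowed w. if 0 \<in> set (w@[c]) then gg x y (w@[c]) else 0)"
    unfolding AA_def by (rule sum_Suc[OF n])
  also have "\<dots> = (\<Sum>w\<in>triwords n. (x + y) * (if 0 \<in> set w then gg x y w else 0) + y * (if 0 \<notin> set w then gg x y w else 0))"
  proof (rule sum.cong)
    fix w assume w: "w \<in> triwords n"
    hence "w \<noteq> []" using n by (auto simp: tr_iff)
    then show "(\<Sum>c\<in>allowed w. if 0 \<in> set (w@[c]) then gg x y (w@[c]) else 0) = (x + y) * (if 0 \<in> set w then gg x y w else 0) + y * (if 0 \<notin> set w then gg x y w else 0)"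
      by (auto simp: allowed_def gg_app algebra_simps)
  qed simp
  finally show ?thesis by (simp add: AA_def BB_def sum.distrib sum_distrib_left)
qed

lemma closed: "BB x y (Suc m) = x * (x+y)^m \<and> AA x y (Suc m) = y * (x+y)^m + real m * x * y * (x+y)^(m-1)"
proof (induction m)
  case 0
  have t: "triwords (Suc 0) = {[0],[1]}" using tr1 by simp
  show ?case by (simp add: AA_def BB_def t gg_def inF_def outF_def)
next
  case (Suc m)
  have "AA x y (Suc (Suc m)) = (x + y) * AA x y (Suc m) + y * BB x y (Suc m)" by (rule A_Suc) simp
  also have "\<dots> = y * (x+y)^Suc m + real (Suc m) * x * y * (x+y)^m"
  proof (cases m)
    case 0 then show ?thesis using Suc.IH by (simp add: algebra_simps)
  next
    case (Suc k)
    then show ?thesis using Suc.IH by (simp add: algebra_simps)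
  qed
  finally show ?case using Suc.IH B_Suc[of "Suc m" x y] by simp
qed

theorem mainTheorem14:
  fixes n :: nat and x y :: real
  assumes "n \<ge> 1"
  shows "degree_poly n x y
           = (x + y) powi (int n - 2) * (x\<^sup>2 + (real n + 1) * x * y + y\<^sup>2)"
proof -
  obtain m where m: "n = Suc m" using assms by (cases n) auto
  have d: "degree_poly n x y = y * (x+y)^m + real m * x * y * (x+y)^(m-1) + x * (x+y)^m"
    using deg_AB[OF assms] closed[of x y m] m by simp
  show ?thesis
  proof (cases m)
    case 0
    have "int n - 2 = - 1" using m 0 by simp
    then have "(x + y) powi (int n - 2) = inverse (x + y)" by (simp add: power_int_minus)
    moreover have "x\<^sup>2 + (real n + 1) * x * y + y\<^sup>2 = (x + y) * (x + y)"
      using m 0 by (simp add: power2_eq_square algebra_simps)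
    ultimately have "(x + y) powi (int n - 2) * (x\<^sup>2 + (real n + 1) * x * y + y\<^sup>2) = inverse (x + y) * ((x + y) * (x + y))"
      by simp
    also have "\<dots> = x + y" by (cases "x + y = 0") (simp_all add: field_simps)
    finally show ?thesis using d 0 by simp
  next
    case (Suc k)
    have "int n - 2 = int k" using m Suc by simp
    then have "(x + y) powi (int n - 2) = (x + y) ^ k" by simp
    then show ?thesis using d Suc m by (simp add: power2_eq_square algebra_simps)
  qed
qed

end
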